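(* Let $E$ be a set and let the power group $G=2^E$ carry a gliding system in which any two independent glides are disjoint subsets of $E$. Let $\omega:X_G\to I^E$ be the evaluation map. Suppose that for any two different cubic sets of glides $S_1,S_2$ one has $[S_1]\ne[S_2]$. Suppose $\mathcal{D}\subset G$ is such that every glide $s$ admits a partition $s=s'\sqcup s''$ into two nonempty subsets with the property that whenever $A\in\mathcal{D}$ and $sA\in\mathcal{D}$, the set $s\cap A$ equals $s'$ or $s''$. Then the restriction of $\omega$ to $X_{\mathcal{D}}\subset X_G$ is injective.
   Context: $2^E$ is the group of subsets of $E$ with product $AB=(A\cup B)\setminus(A\cap B)$; every element is its own inverse. A gliding system in $G$ is a pair $(\mathcal{G},\mathcal{I})$, $\mathcal{G}\subset G\setminus\{\emptyset\}$ (glides), $\mathcal{I}\subset\mathcal{G}\times\mathcal{G}$ symmetric (independence) with $st=ts\ne\emptyset$ for $(s,t)\in\mathcal{I}$. A cubic set of glides is a finite set $S$ of pairwise independent glides with $[T_1]\ne[T_2]$ for distinct $T_1,T_2\subset S$, where $[T]=\prod_{t\in T}t$ (here the union, since independent glides are disjoint). The glide complex $X_G$ is the cubed complex obtained from the cubes $I^S$ (points $(A,S,x)$, $A\in G$, $S$ cubic, $x:S\to I=[0,1]$) modulo the equivalence generated by $(A,S,x)\sim(A,S',x')$ when $S\subset S'$, $x'|_S=x$, $x'(S'\setminus S)=0$, and $(A,S,x)\sim([T]A,S,x')$ when $T\subset S$, $x'=x$ on $S\setminus T$, $x'(t)=1-x(t)$ for $t\in T$. For $\mathcal{D}\subset G$,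 $X_{\mathcal{D}}$ is the subcomplex of cubes all of whose vertices $[T]A$ ($T\subset S$) lie in $\mathcal{D}$. For $A\subset E$ let $\delta_A:E\to\{0,1\}$ be its characteristic function. The evaluation map is $\omega(A,S,x)=\delta_A+(1-2\delta_A)\sum_{s\in S}x(s)\delta_s$; explicitly $\omega(a)(e)=\delta_A(e)$ for $e\notin\bigcup_{s\in S}s$, $=x(s)$ for $e\in s\setminus A$, and $=1-x(s)$ for $e\in s\cap A$ ($s\in S$). *)

theory Defs
  imports Main "HOL-Library.Indicator_Function"
begin

text \<open>The power group G = 2^E is the type 'e set, with product the symmetric difference.\<close>

definition gprod :: "'e set \<Rightarrow> 'e set \<Rightarrow> 'e set" where
  "gprod A B = (A \<union> B) - (A \<inter> B)"

text \<open>Product [T] of a finite set T of group elements (empty product = neutral element {}).\<close>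
definition bprod :: "'e set set \<Rightarrow> 'e set" where
  "bprod T = {e. odd (card {t \<in> T. e \<in> t})}"

definition gliding_system :: "'e set set \<Rightarrow> ('e set \<times> 'e set) set \<Rightarrow> bool" where
  "gliding_system Gl Ind \<longleftrightarrow> {} \<notin> Gl \<and> Ind \<subseteq> Gl \<times> Gl \<and> sym Ind \<and>
     (\<forall>(s,t)\<in>Ind. gprod s t = gprod t s \<and> gprod s t \<noteq> {})"

definition cubic :: "'e set set \<Rightarrow> ('e set \<times> 'e set) set \<Rightarrow> 'e set set \<Rightarrow> bool" where
  "cubic Gl Ind S \<longleftrightarrow> finite S \<and> S \<subseteq> Gl \<and>
     (\<forall>s\<in>S. \<forall>t\<in>S. s \<noteq> t \<longrightarrow> (s,t) \<in> Ind) \<and>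
     (\<forall>T1 T2. T1 \<subseteq> S \<longrightarrow> T2 \<subseteq> S \<longrightarrow> T1 \<noteq> T2 \<longrightarrow> bprod T1 \<noteq> bprod T2)"

text \<open>Representatives (A, S, x) of points of the glide complex; x : S \<rightarrow> [0,1],
  normalised to 0 outside S.\<close>
type_synonym 'e gpoint = "'e set \<times> 'e set set \<times> ('e set \<Rightarrow> real)"

definition is_gpoint :: "'e set set \<Rightarrow> ('e set \<times> 'e set) set \<Rightarrow> 'e gpoint \<Rightarrow> bool" where
  "is_gpoint Gl Ind p \<longleftrightarrow> (case p of (A, S, x) \<Rightarrow>
     cubic Gl Ind S \<and> (\<forall>s\<in>S. 0 \<le> x s \<and> x s \<le> 1) \<and> (\<forall>s. s \<notin> S \<longrightarrow> x s = 0))"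

definition glide_step :: "'e set set \<Rightarrow> ('e set \<times> 'e set) set \<Rightarrow> 'e gpoint \<Rightarrow> 'e gpoint \<Rightarrow> bool" where
  "glide_step Gl Ind p q \<longleftrightarrow> is_gpoint Gl Ind p \<and> is_gpoint Gl Ind q \<and>
     (case p of (A, S, x) \<Rightarrow> case q of (A', S', x') \<Rightarrow>
       (A' = A \<and> S \<subseteq> S' \<and> (\<forall>s\<in>S. x' s = x s) \<and> (\<forall>s\<in>S' - S. x' s = 0))
     \<or> (\<exists>T. T \<subseteq> S \<and> A' = gprod (bprod T) A \<and> S' = S \<and>
            (\<forall>s\<in>S - T. x' s = x s) \<and> (\<forall>t\<in>T. x' t = 1 - x t)))"

definition glide_equiv :: "'e set set \<Rightarrow> ('e set \<times> 'e set) set \<Rightarrow> 'e gpoint \<Rightarrow> 'e gpoint \<Rightarrow> bool" where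
  "glide_equiv Gl Ind = (\<lambda>p q. glide_step Gl Ind p q \<or> glide_step Gl Ind q p)\<^sup>*\<^sup>*"

definition in_XD :: "'e set set \<Rightarrow> ('e set \<times> 'e set) set \<Rightarrow> 'e set set \<Rightarrow> 'e gpoint \<Rightarrow> bool" where
  "in_XD Gl Ind D p \<longleftrightarrow> is_gpoint Gl Ind p \<and>
     (case p of (A, S, x) \<Rightarrow> \<forall>T. T \<subseteq> S \<longrightarrow> gprod (bprod T) A \<in> D)"

definition evalmap :: "'e gpoint \<Rightarrow> 'e \<Rightarrow> real" where
  "evalmap p = (case p of (A, S, x) \<Rightarrow> \<lambda>e.
     indicator A e + (1 - 2 * indicator A e) * (\<Sum>s\<in>S. x s * indicator s e))"

end

theory Submission
  imports Defs
begin

lemma gprod_alt: "gprod A B = (A - B) \<union> (B - A)"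
  unfolding gprod_def by auto

lemma disjD:
  assumes "\<forall>s\<in>S. \<forall>t\<in>S. s \<noteq> t \<longrightarrow> s \<inter> t = {}" "s \<in> S" "t \<in> S" "s \<noteq> t"
  shows "s \<inter> t = {}"
proof -
  from assms(1) assms(2) have "\<forall>t\<in>S. s \<noteq> t \<longrightarrow> s \<inter> t = {}" by (rule bspec)
  then have "s \<noteq> t \<longrightarrow> s \<inter> t = {}" using assms(3) by (rule bspec)
  then show "s \<inter> t = {}" using assms(4) by (rule mp)
qed

lemma bprod_disj:
  assumes "\<forall>s\<in>S. \<forall>t\<in>S. s \<noteq> t \<longrightarrow> s \<inter> t = {}"
  shows "bprod S = \<Union>S"
proof (rule set_eqI)
  fix e
  show "e \<in> bprod S \<longleftrightarrow> e \<in> \<Union>S"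
  proof (cases "e \<in> \<Union>S")
    case True
    then obtain s where s: "s \<in> S" "e \<in> s" by auto
    have "{t\<in>S. e \<in> t} = {s}"
    proof (rule set_eqI)
      fix t
      show "t \<in> {t\<in>S. e \<in> t} \<longleftrightarrow> t \<in> {s}"
      proof
        assume t: "t \<in> {t\<in>S. e \<in> t}"
        then have tS: "t \<in> S" and et: "e \<in> t" by simp_all
        show "t \<in> {s}"
        proof (rule ccontr)
          assume "t \<notin> {s}"
          then have "s \<inter> t = {}" using disjD[OF assms s(1) tS] by simp
          moreover have "e \<in> s \<inter> t" using s(2) et by simp
          ultimately show False by simp
        qed
      next
        assume "t \<in> {s}" then show "t \<in> {t\<in>S. e \<in> t}" using s by simp
      qed
    qed
    then show ?thesis using True unfolding bprod_def by simp
  next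
    case False
    then have "{t\<in>S. e \<in> t} = {}" by auto
    then have c: "card {t\<in>S. e \<in> t} = 0" by (metis card.empty)
    show ?thesis using False c unfolding bprod_def by simp
  qed
qed

lemma cubic_subset:
  assumes c: "cubic Gl Ind S" and sub: "S' \<subseteq> S" shows "cubic Gl Ind S'"
proof -
  have f: "finite S" and g: "S \<subseteq> Gl" and i: "\<forall>s\<in>S. \<forall>t\<in>S. s \<noteq> t \<longrightarrow> (s,t) \<in> Ind"
    and b: "\<forall>T1 T2. T1 \<subseteq> S \<longrightarrow> T2 \<subseteq> S \<longrightarrow> T1 \<noteq> T2 \<longrightarrow> bprod T1 \<noteq> bprod T2"
    using c unfolding cubic_def by simp_all
  have 1: "finite S'" using f sub by (rule finite_subset[rotated])
  have 2: "S' \<subseteq> Gl" using sub g by (rule subset_trans)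
  have 3: "\<forall>s\<in>S'. \<forall>t\<in>S'. s \<noteq> t \<longrightarrow> (s,t) \<in> Ind"
  proof (intro ballI impI)
    fix s t assume "s \<in> S'" "t \<in> S'" "s \<noteq> t"
    then show "(s,t) \<in> Ind" using i sub by (meson subsetD)
  qed
  have 4: "\<forall>T1 T2. T1 \<subseteq> S' \<longrightarrow> T2 \<subseteq> S' \<longrightarrow> T1 \<noteq> T2 \<longrightarrow> bprod T1 \<noteq> bprod T2"
  proof (intro allI impI)
    fix T1 T2 assume "T1 \<subseteq> S'" "T2 \<subseteq> S'" "T1 \<noteq> T2"
    moreover have "T1 \<subseteq> S" "T2 \<subseteq> S" using \<open>T1 \<subseteq> S'\<close> \<open>T2 \<subseteq> S'\<close> sub by (meson subset_trans)+
    ultimately show "bprod T1 \<noteq> bprod T2" using b by metis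
  qed
  show ?thesis unfolding cubic_def using 1 2 3 4 by (intro conjI)
qed

lemma cubic_disj:
  assumes c: "cubic Gl Ind S" and d: "\<forall>(s,t)\<in>Ind. s \<inter> t = {}"
  shows "\<forall>s\<in>S. \<forall>t\<in>S. s \<noteq> t \<longrightarrow> s \<inter> t = {}"
proof (intro ballI impI)
  fix s t assume "s \<in> S" "t \<in> S" "s \<noteq> t"
  have i: "\<forall>s\<in>S. \<forall>t\<in>S. s \<noteq> t \<longrightarrow> (s,t) \<in> Ind" using c unfolding cubic_def by simp
  have "(s,t) \<in> Ind" using i \<open>s \<in> S\<close> \<open>t \<in> S\<close> \<open>s \<noteq> t\<close> by simp
  then show "s \<inter> t = {}" using d by (auto simp del: Int_iff)
qed

lemma gprod_mem: "e \<in> gprod X Y \<longleftrightarrow> (e \<in> X \<longleftrightarrow> e \<notin> Y)"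
  unfolding gprod_def by blast

lemma disj_sub:
  assumes "\<forall>s\<in>S. \<forall>t\<in>S. s \<noteq> t \<longrightarrow> s \<inter> t = {}" "T \<subseteq> S"
  shows "\<forall>s\<in>T. \<forall>t\<in>T. s \<noteq> t \<longrightarrow> s \<inter> t = {}"
proof (intro ballI impI)
  fix s t assume st: "s \<in> T" "t \<in> T" "s \<noteq> t"
  have "s \<in> S" "t \<in> S" using st assms(2) by (auto dest: subsetD)
  from assms(1) \<open>s \<in> S\<close> have "\<forall>t\<in>S. s \<noteq> t \<longrightarrow> s \<inter> t = {}" by (rule bspec)
  then have "s \<noteq> t \<longrightarrow> s \<inter> t = {}" using \<open>t \<in> S\<close> by (rule bspec)
  then show "s \<inter> t = {}" using st(3) by (rule mp)
qed

lemma gprod_assoc_disj: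
  assumes "X \<inter> Y = {}" shows "gprod X (gprod Y A) = gprod (X \<union> Y) A"
proof (rule set_eqI)
  fix e
  have "\<not> (e \<in> X \<and> e \<in> Y)" using assms by blast
  then show "e \<in> gprod X (gprod Y A) \<longleftrightarrow> e \<in> gprod (X \<union> Y) A"
    unfolding gprod_mem by auto
qed

lemma mem_Union_disj:
  assumes dj: "\<forall>s\<in>S. \<forall>t\<in>S. s \<noteq> t \<longrightarrow> s \<inter> t = {}" and TS: "T \<subseteq> S"
    and s: "s \<in> S" "e \<in> s"
  shows "e \<in> \<Union>T \<longleftrightarrow> s \<in> T"
proof
  assume "e \<in> \<Union>T"
  then obtain t where t: "t \<in> T" "e \<in> t" by (rule UnionE)
  have tS: "t \<in> S" using t(1) TS by (rule subsetD[rotated])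
  have "t = s"
  proof (rule ccontr)
    assume "t \<noteq> s"
    then have "s \<inter> t = {}" using disjD[OF dj s(1) tS] by simp
    moreover have "e \<in> s \<inter> t" using s(2) t(2) by simp
    ultimately show False by simp
  qed
  then show "s \<in> T" using t by simp
next
  assume "s \<in> T" then show "e \<in> \<Union>T" using s(2) by (rule UnionI)
qed

lemma eval_in:
  assumes "finite S" "\<forall>s\<in>S. \<forall>t\<in>S. s \<noteq> t \<longrightarrow> s \<inter> t = {}" "s \<in> S" "e \<in> s"
  shows "evalmap (A,S,x) e = (if e \<in> A then 1 - x s else x s)"
proof -
  have "(\<Sum>t\<in>S. x t * indicator t e) = x s * indicator s e + (\<Sum>t\<in>S-{s}. x t * indicator t e)"
    using assms(1,3) by (simp add: sum.remove)
  also have "(\<Sum>t\<in>S-{s}. x t * indicator t e) = 0"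
  proof (intro sum.neutral ballI)
    fix t assume "t \<in> S-{s}"
    then have tS: "t \<in> S" and ts: "t \<noteq> s" by simp_all
    have "s \<inter> t = {}" using disjD[OF assms(2) assms(3) tS] ts by simp
    then have "e \<notin> t" using assms(4) by (auto simp del: Int_iff dest: equals0D)
    then show "x t * indicator t e = 0" by simp
  qed
  finally have "(\<Sum>t\<in>S. x t * indicator t e) = x s" using assms(4) by simp
  then show ?thesis unfolding evalmap_def by (simp add: indicator_def)
qed

lemma eval_out:
  assumes "e \<notin> \<Union>S"
  shows "evalmap (A,S,x) e = indicator A e"
proof -
  have "(\<Sum>t\<in>S. x t * indicator t e) = 0" using assms by (intro sum.neutral) auto
  then show ?thesis unfolding evalmap_def by simp
qed

lemma canon:
  assumes disj: "\<forall>(s,t)\<in>Ind. s \<inter> t = {}" and p: "in_XD Gl Ind D (A,S,x)"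
  shows "\<exists>A' S' x'. in_XD Gl Ind D (A',S',x') \<and> (\<forall>s\<in>S'. 0 < x' s \<and> x' s < 1) \<and>
     evalmap (A,S,x) = evalmap (A',S',x') \<and> glide_equiv Gl Ind (A,S,x) (A',S',x') \<and>
     glide_equiv Gl Ind (A',S',x') (A,S,x)"
proof -
  have gp: "is_gpoint Gl Ind (A,S,x)" using p unfolding in_XD_def by simp
  have cub: "cubic Gl Ind S" and xr: "\<forall>s\<in>S. 0 \<le> x s \<and> x s \<le> 1" and x0: "\<forall>s. s \<notin> S \<longrightarrow> x s = 0"
    using gp unfolding is_gpoint_def by auto
  have DD: "\<forall>T. T \<subseteq> S \<longrightarrow> gprod (bprod T) A \<in> D" using p unfolding in_XD_def by simp
  have fin: "finite S" using cub unfolding cubic_def by simp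
  have dj: "\<forall>s\<in>S. \<forall>t\<in>S. s \<noteq> t \<longrightarrow> s \<inter> t = {}" using cubic_disj[OF cub disj] .
  define T1 where "T1 = {s\<in>S. x s = 1}"
  define A1 where "A1 = gprod (bprod T1) A"
  define x1 where "x1 = (\<lambda>s. if s\<in>T1 then 0 else x s)"
  define S2 where "S2 = {s\<in>S. 0 < x s \<and> x s < 1}"
  define x2 where "x2 = (\<lambda>s. if s\<in>S2 then x s else (0::real))"
  have T1S: "T1 \<subseteq> S" and S2S: "S2 \<subseteq> S" unfolding T1_def S2_def by auto
  have bT1: "bprod T1 = \<Union>T1" using disj_sub[OF dj T1S] by (rule bprod_disj)
  have A1m: "\<And>e. e \<in> A1 \<longleftrightarrow> (e \<in> A \<longleftrightarrow> e \<notin> \<Union>T1)"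
    unfolding A1_def bT1 gprod_def by auto
  have gp1: "is_gpoint Gl Ind (A1,S,x1)"
    unfolding is_gpoint_def using cub xr x0 by (auto simp: x1_def)
  have gp2: "is_gpoint Gl Ind (A1,S2,x2)"
    unfolding is_gpoint_def using cubic_subset[OF cub S2S] by (auto simp: x2_def S2_def)
  have st1: "glide_step Gl Ind (A,S,x) (A1,S,x1)"
  proof -
    have "\<exists>T. T \<subseteq> S \<and> A1 = gprod (bprod T) A \<and> S = S \<and>
            (\<forall>s\<in>S - T. x1 s = x s) \<and> (\<forall>t\<in>T. x1 t = 1 - x t)"
      by (rule exI[of _ T1]) (auto simp: x1_def A1_def T1_def)
    then show ?thesis using gp gp1 unfolding glide_step_def by simp
  qed
  have st2: "glide_step Gl Ind (A1,S2,x2) (A1,S,x1)"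
  proof -
    have a: "\<forall>s\<in>S2. x1 s = x2 s" unfolding x1_def x2_def S2_def T1_def by auto
    have b: "\<forall>s\<in>S - S2. x1 s = 0"
    proof
      fix s assume s: "s \<in> S - S2"
      have b1: "0 \<le> x s" "x s \<le> 1" using xr s by auto
      have "\<not> (0 < x s \<and> x s < 1)" using s unfolding S2_def by simp
      then have "x s = 0 \<or> x s = 1" using b1 by linarith
      then show "x1 s = 0" using s unfolding x1_def T1_def by auto
    qed
    show ?thesis using gp gp1 gp2 a b S2S unfolding glide_step_def by simp
  qed
  have xd2: "in_XD Gl Ind D (A1,S2,x2)"
    unfolding in_XD_def
  proof (simp add: gp2, intro allI impI)
    fix T assume TS: "T \<subseteq> S2"
    have TT: "T \<union> T1 \<subseteq> S" using TS S2S T1S by auto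
    have TS': "T \<subseteq> S" using TS S2S by blast
    have bT: "bprod T = \<Union>T" using disj_sub[OF dj TS'] by (rule bprod_disj)
    have bTT: "bprod (T \<union> T1) = \<Union>(T \<union> T1)" using disj_sub[OF dj TT] by (rule bprod_disj)
    have dis: "\<Union>T \<inter> \<Union>T1 = {}"
    proof -
      have TT1: "T \<inter> T1 = {}" using TS unfolding S2_def T1_def by auto
      show ?thesis
      proof (rule ccontr)
        assume "\<Union>T \<inter> \<Union>T1 \<noteq> {}"
        then obtain e where e: "e \<in> \<Union>T" "e \<in> \<Union>T1" by blast
        then obtain s where s: "s \<in> T" "e \<in> s" by blast
        have "s \<in> S" using s TS' by blast
        have "s \<in> T1" using mem_Union_disj[OF dj T1S \<open>s \<in> S\<close> s(2)] e(2) by simp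
        then show False using TT1 s(1) by blast
      qed
    qed
    have "gprod (bprod T) A1 = gprod (bprod (T \<union> T1)) A"
      unfolding A1_def bT bTT bT1 using gprod_assoc_disj[OF dis] by simp
    then show "gprod (bprod T) A1 \<in> D" using DD TT by simp
  qed
  have ev: "evalmap (A,S,x) = evalmap (A1,S2,x2)"
  proof (rule ext)
    fix e
    show "evalmap (A,S,x) e = evalmap (A1,S2,x2) e"
    proof (cases "e \<in> \<Union>S")
      case False
      then have n2: "e \<notin> \<Union>S2" and n1: "e \<notin> \<Union>T1" using S2S T1S by auto
      have "e \<in> A1 \<longleftrightarrow> e \<in> A" using A1m[of e] n1 by simp
      then show ?thesis using eval_out[OF False, of A x] eval_out[OF n2, of A1 x2]
        by (simp add: indicator_def)
    next
      case True
      then obtain s where s: "s \<in> S" "e \<in> s" by auto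
      have inT1: "e \<in> \<Union>T1 \<longleftrightarrow> s \<in> T1" using mem_Union_disj[OF dj T1S s] .
      show ?thesis
      proof (cases "s \<in> S2")
        case True
        have dj2: "\<forall>s\<in>S2. \<forall>t\<in>S2. s \<noteq> t \<longrightarrow> s \<inter> t = {}" using disj_sub[OF dj S2S] .
        have "s \<notin> T1" using True unfolding S2_def T1_def by auto
        then show ?thesis using eval_in[OF fin dj s] eval_in[OF finite_subset[OF S2S fin] dj2 True s(2)]
            A1m inT1 by (simp add: x2_def True)
      next
        case False
        have "e \<notin> \<Union>S2" using mem_Union_disj[OF dj S2S s] False by simp
        then have e2: "evalmap (A1,S2,x2) e = indicator A1 e" by (rule eval_out)
        have b1: "0 \<le> x s" "x s \<le> 1" using xr s(1) by auto
        have "\<not> (0 < x s \<and> x s < 1)" using False s(1) unfolding S2_def by simp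
        then have "x s = 0 \<or> x s = 1" using b1 by linarith
        then show ?thesis
        proof
          assume "x s = 0"
          then have "s \<notin> T1" unfolding T1_def by auto
          then show ?thesis using e2 eval_in[OF fin dj s] A1m inT1 \<open>x s = 0\<close>
            by (simp add: indicator_def)
        next
          assume "x s = 1"
          then have "s \<in> T1" unfolding T1_def using s by auto
          then show ?thesis using e2 eval_in[OF fin dj s] A1m inT1 \<open>x s = 1\<close>
            by (simp add: indicator_def)
        qed
      qed
    qed
  qed
  let ?R = "\<lambda>p q. glide_step Gl Ind p q \<or> glide_step Gl Ind q p"
  have e1: "glide_equiv Gl Ind (A,S,x) (A1,S2,x2)"
    unfolding glide_equiv_def
    by (rule rtranclp.rtrancl_into_rtrancl[OF r_into_rtranclp[of ?R, OF disjI1[OF st1]]])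
       (simp add: st2)
  have e2: "glide_equiv Gl Ind (A1,S2,x2) (A,S,x)"
    unfolding glide_equiv_def
    by (rule rtranclp.rtrancl_into_rtrancl[OF r_into_rtranclp[of ?R, OF disjI1[OF st2]]])
       (simp add: st1)
  have "\<forall>s\<in>S2. 0 < x2 s \<and> x2 s < 1" unfolding x2_def S2_def by auto
  then show ?thesis using xd2 ev e1 e2 by (intro exI[of _ A1] exI[of _ S2] exI[of _ x2]) simp
qed

lemma eval_range:
  assumes "finite S" "\<forall>s\<in>S. \<forall>t\<in>S. s \<noteq> t \<longrightarrow> s \<inter> t = {}" "\<forall>s\<in>S. 0 < x s \<and> x s < 1"
  shows "e \<in> \<Union>S \<longleftrightarrow> (0 < evalmap (A,S,x) e \<and> evalmap (A,S,x) e < 1)"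
proof (cases "e \<in> \<Union>S")
  case True
  then obtain s where s: "s \<in> S" "e \<in> s" by auto
  show ?thesis using eval_in[OF assms(1,2) s, of A x] assms(3) s True by auto
next
  case False
  show ?thesis using eval_out[OF False, of A x] False by (simp add: indicator_def)
qed

lemma bprod_empty: "bprod {} = {}" unfolding bprod_def by simp

lemma bprod_single: "bprod {s} = s" by (subst bprod_disj) auto

lemma gprod_empty: "gprod {} A = A" unfolding gprod_def by simp

lemma core:
  assumes disj: "\<forall>(s,t)\<in>Ind. s \<inter> t = {}"
    and cub_inj: "\<forall>S1 S2. cubic Gl Ind S1 \<longrightarrow> cubic Gl Ind S2 \<longrightarrow> S1 \<noteq> S2 \<longrightarrow> bprod S1 \<noteq> bprod S2"
    and part: "\<forall>s\<in>Gl. \<exists>s' s''. s' \<noteq> {} \<and> s'' \<noteq> {} \<and> s' \<inter> s'' = {} \<and> s' \<union> s'' = s \<and>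
                 (\<forall>A\<in>D. gprod s A \<in> D \<longrightarrow> s \<inter> A = s' \<or> s \<inter> A = s'')"
    and xp: "in_XD Gl Ind D (A,S,x)" and xq: "in_XD Gl Ind D (B,R,y)"
    and cp: "\<forall>s\<in>S. 0 < x s \<and> x s < 1" and cq: "\<forall>s\<in>R. 0 < y s \<and> y s < 1"
    and ev: "evalmap (A,S,x) = evalmap (B,R,y)"
  shows "glide_step Gl Ind (A,S,x) (B,R,y)"
proof -
  have gpA: "is_gpoint Gl Ind (A,S,x)" using xp unfolding in_XD_def by simp
  have gpB: "is_gpoint Gl Ind (B,R,y)" using xq unfolding in_XD_def by simp
  have cubS: "cubic Gl Ind S" using gpA unfolding is_gpoint_def by simp
  have cubR: "cubic Gl Ind R" using gpB unfolding is_gpoint_def by simp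
  have DA: "\<forall>T. T \<subseteq> S \<longrightarrow> gprod (bprod T) A \<in> D" using xp unfolding in_XD_def by simp
  have DB: "\<forall>T. T \<subseteq> R \<longrightarrow> gprod (bprod T) B \<in> D" using xq unfolding in_XD_def by simp
  have finS: "finite S" using cubS unfolding cubic_def by simp
  have finR: "finite R" using cubR unfolding cubic_def by simp
  have djS: "\<forall>s\<in>S. \<forall>t\<in>S. s \<noteq> t \<longrightarrow> s \<inter> t = {}" using cubic_disj[OF cubS disj] .
  have djR: "\<forall>s\<in>R. \<forall>t\<in>R. s \<noteq> t \<longrightarrow> s \<inter> t = {}" using cubic_disj[OF cubR disj] .
  have U: "\<Union>S = \<Union>R"
  proof (rule set_eqI)
    fix e show "e \<in> \<Union>S \<longleftrightarrow> e \<in> \<Union>R"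
      using eval_range[OF finS djS cp, of e A] eval_range[OF finR djR cq, of e B] ev by simp
  qed
  have SR: "S = R"
  proof (rule ccontr)
    assume "S \<noteq> R"
    then show False using cub_inj[rule_format, OF cubS cubR] bprod_disj[OF djS] bprod_disj[OF djR] U by simp
  qed
  have key: "s \<inter> A \<noteq> {} \<and> s - A \<noteq> {} \<and> (s \<inter> A = s \<inter> B \<or> s \<inter> B = s - A)" if sS: "s \<in> S" for s
  proof -
    have "S \<subseteq> Gl" using cubS unfolding cubic_def by simp
    then have "s \<in> Gl" using sS by (rule subsetD)
    then have ex: "\<exists>s' s''. s' \<noteq> {} \<and> s'' \<noteq> {} \<and> s' \<inter> s'' = {} \<and> s' \<union> s'' = s \<and>
                 (\<forall>A\<in>D. gprod s A \<in> D \<longrightarrow> s \<inter> A = s' \<or> s \<inter> A = s'')" using part by (rule bspec[rotated])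
    then obtain s' s'' where ss0: "s' \<noteq> {} \<and> s'' \<noteq> {} \<and> s' \<inter> s'' = {} \<and> s' \<union> s'' = s \<and>
                 (\<forall>A\<in>D. gprod s A \<in> D \<longrightarrow> s \<inter> A = s' \<or> s \<inter> A = s'')" by (elim exE)
    have ss: "s' \<noteq> {}" "s'' \<noteq> {}" "s' \<inter> s'' = {}" "s' \<union> s'' = s"
      using ss0 by simp_all
    have pr: "\<forall>A\<in>D. gprod s A \<in> D \<longrightarrow> s \<inter> A = s' \<or> s \<inter> A = s''" using ss0 by simp
    have AD: "A \<in> D" using DA[rule_format, of "{}"] by (simp add: bprod_empty gprod_empty)
    have "gprod s A \<in> D \<longrightarrow> s \<inter> A = s' \<or> s \<inter> A = s''" using pr AD by (rule bspec)
    moreover have "gprod s A \<in> D" using DA[rule_format, of "{s}"] sS by (simp add: bprod_single)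
    ultimately have a: "s \<inter> A = s' \<or> s \<inter> A = s''" by (rule mp)
    have BD: "B \<in> D" using DB[rule_format, of "{}"] by (simp add: bprod_empty gprod_empty)
    have "gprod s B \<in> D \<longrightarrow> s \<inter> B = s' \<or> s \<inter> B = s''" using pr BD by (rule bspec)
    moreover have "gprod s B \<in> D" using DB[rule_format, of "{s}"] sS SR by (simp add: bprod_single)
    ultimately have b: "s \<inter> B = s' \<or> s \<inter> B = s''" by (rule mp)
    have c1: "s - s' = s''" "s - s'' = s'" using ss by auto
    have sA: "s - A = s - (s \<inter> A)" by blast
    have "s \<inter> A \<noteq> {} \<and> s - (s \<inter> A) \<noteq> {} \<and> (s \<inter> A = s \<inter> B \<or> s \<inter> B = s - (s \<inter> A))"
      using a b
    proof (elim disjE)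
      assume "s \<inter> A = s'" "s \<inter> B = s'" then show ?thesis using c1 ss by simp
    next
      assume "s \<inter> A = s'" "s \<inter> B = s''" then show ?thesis using c1 ss by simp
    next
      assume "s \<inter> A = s''" "s \<inter> B = s'" then show ?thesis using c1 ss by simp
    next
      assume "s \<inter> A = s''" "s \<inter> B = s''" then show ?thesis using c1 ss by simp
    qed
    then show ?thesis using sA by simp
  qed
  define T where "T = {s\<in>S. s \<inter> A \<noteq> s \<inter> B}"
  have TS: "T \<subseteq> S" unfolding T_def by auto
  have xy: "(if s \<in> T then y s = 1 - x s else y s = x s)" if sS: "s \<in> S" for s
  proof (cases "s \<in> T")
    case True
    then have "s \<inter> A \<noteq> s \<inter> B" unfolding T_def by simp
    then have sB: "s \<inter> B = s - A" using key[OF sS] by simp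
    obtain e where e: "e \<in> s" "e \<in> A" using key[OF sS] by auto
    have "e \<notin> B" using sB e by auto
    then show ?thesis using True eval_in[OF finS djS sS e(1), of A x] eval_in[OF finR djR _ e(1), of B y]
        sS SR e ev by simp
  next
    case False
    then have sB: "s \<inter> B = s \<inter> A" using sS unfolding T_def by simp
    obtain e where e: "e \<in> s" "e \<notin> A" using key[OF sS] by auto
    have "e \<notin> B" using sB e by auto
    then show ?thesis using False eval_in[OF finS djS sS e(1), of A x] eval_in[OF finR djR _ e(1), of B y]
        sS SR e ev by simp
  qed
  have bT: "bprod T = \<Union>T" using disj_sub[OF djS TS] by (rule bprod_disj)
  have Bd: "B = gprod (bprod T) A"
  proof (rule set_eqI)
    fix e
    show "e \<in> B \<longleftrightarrow> e \<in> gprod (bprod T) A"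
    proof (cases "e \<in> \<Union>S")
      case False
      have "e \<notin> \<Union>R" using False U by simp
      have "e \<notin> \<Union>T" using False TS by blast
      then show ?thesis using eval_out[OF False, of A x] eval_out[OF \<open>e \<notin> \<Union>R\<close>, of B y] ev
        unfolding bT gprod_def by (auto simp: indicator_def split: if_splits)
    next
      case True
      then obtain s where s: "s \<in> S" "e \<in> s" by auto
      have inT: "e \<in> \<Union>T \<longleftrightarrow> s \<in> T" using mem_Union_disj[OF djS TS s] .
      show ?thesis
      proof (cases "s \<in> T")
        case True
        then have "s \<inter> A \<noteq> s \<inter> B" unfolding T_def by simp
        then have sB: "s \<inter> B = s - A" using key[OF s(1)] by simp
        have eB: "e \<in> B \<longleftrightarrow> e \<notin> A" using sB s(2) by (metis Diff_iff Int_iff)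
        have "e \<in> \<Union>T" using inT True by simp
        then show ?thesis using eB unfolding bT gprod_def by simp
      next
        case False
        then have sB: "s \<inter> B = s \<inter> A" using s unfolding T_def by simp
        have eB: "e \<in> B \<longleftrightarrow> e \<in> A" using sB s(2) by (metis Int_iff)
        have "e \<notin> \<Union>T" using inT False by simp
        then show ?thesis using eB unfolding bT gprod_def by simp
      qed
    qed
  qed
  have "\<exists>T. T \<subseteq> S \<and> B = gprod (bprod T) A \<and> R = S \<and>
            (\<forall>s\<in>S - T. y s = x s) \<and> (\<forall>t\<in>T. y t = 1 - x t)"
    using TS Bd SR xy by (intro exI[of _ T]) (auto split: if_splits)
  then show ?thesis using gpA gpB unfolding glide_step_def by simp
qed

theorem lemma10p1:
  fixes Gl :: "'e set set" and Ind :: "('e set \<times> 'e set) set" and D :: "'e set set"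
  assumes gs: "gliding_system Gl Ind"
    and disj: "\<forall>(s,t)\<in>Ind. s \<inter> t = {}"
    and cub_inj: "\<forall>S1 S2. cubic Gl Ind S1 \<longrightarrow> cubic Gl Ind S2 \<longrightarrow> S1 \<noteq> S2 \<longrightarrow> bprod S1 \<noteq> bprod S2"
    and part: "\<forall>s\<in>Gl. \<exists>s' s''. s' \<noteq> {} \<and> s'' \<noteq> {} \<and> s' \<inter> s'' = {} \<and> s' \<union> s'' = s \<and>
                 (\<forall>A\<in>D. gprod s A \<in> D \<longrightarrow> s \<inter> A = s' \<or> s \<inter> A = s'')"
  shows "\<forall>p q. in_XD Gl Ind D p \<longrightarrow> in_XD Gl Ind D q \<longrightarrow> evalmap p = evalmap q
            \<longrightarrow> glide_equiv Gl Ind p q"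
proof (intro allI impI)
  fix p q :: "'e gpoint"
  assume p: "in_XD Gl Ind D p" and q: "in_XD Gl Ind D q" and ev: "evalmap p = evalmap q"
  obtain A S x where pe: "p = (A,S,x)" by (cases p) auto
  obtain B R y where qe: "q = (B,R,y)" by (cases q) auto
  obtain A' S' x' where a: "in_XD Gl Ind D (A',S',x')" "\<forall>s\<in>S'. 0 < x' s \<and> x' s < 1"
     "evalmap (A,S,x) = evalmap (A',S',x')" "glide_equiv Gl Ind (A,S,x) (A',S',x')"
    using canon[OF disj p[unfolded pe]] by blast
  obtain B' R' y' where b: "in_XD Gl Ind D (B',R',y')" "\<forall>s\<in>R'. 0 < y' s \<and> y' s < 1"
     "evalmap (B,R,y) = evalmap (B',R',y')" "glide_equiv Gl Ind (B',R',y') (B,R,y)"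
    using canon[OF disj q[unfolded qe]] by blast
  have st: "glide_step Gl Ind (A',S',x') (B',R',y')"
    using core[OF disj cub_inj part a(1) b(1) a(2) b(2)] a(3) b(3) ev pe qe by simp
  have "glide_equiv Gl Ind (A',S',x') (B',R',y')"
    unfolding glide_equiv_def using st by (intro r_into_rtranclp) simp
  then show "glide_equiv Gl Ind p q"
    using a(4) b(4) pe qe unfolding glide_equiv_def by (meson rtranclp_trans)
qed

end
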